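(* A dually chordal graph $G$ is $3$-colourable if and only if $G$ is perfect and $K_4$-free.
   Context: All graphs are finite, simple, undirected and connected. For a vertex $v$, $N[v]$ denotes its closed neighbourhood. A vertex $u\in N[v]$ is a maximum neighbour of $v$ if $N[w]\subseteq N[u]$ for all $w\in N[v]$ ($u=v$ allowed). A vertex ordering $(v_1,\dots,v_n)$ is a maximum neighbourhood ordering if every $v_i$ has a maximum neighbour in $G[\{v_i,\dots,v_n\}]$. A graph is dually chordal if it has a maximum neighbourhood ordering. A graph is perfect if every induced subgraph $H$ satisfies $\chi(H)=\omega(H)$ (chromatic number equals clique number). *)

theory Defs
  imports Main
begin

definition simple_graph :: "'a set \<Rightarrow> ('a \<Rightarrow> 'a \<Rightarrow> bool) \<Rightarrow> bool" where
  "simple_graph V E \<longleftrightarrow> finite V \<and> (\<forall>u v. E u v \<longrightarrow> u \<in> V \<and> v \<in> V)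
     \<and> (\<forall>u v. E u v \<longrightarrow> E v u) \<and> (\<forall>v. \<not> E v v)"

definition connected_graph :: "'a set \<Rightarrow> ('a \<Rightarrow> 'a \<Rightarrow> bool) \<Rightarrow> bool" where
  "connected_graph V E \<longleftrightarrow> V \<noteq> {} \<and>
     (\<forall>u\<in>V. \<forall>v\<in>V. (\<lambda>x y. E x y \<and> x \<in> V \<and> y \<in> V)\<^sup>*\<^sup>* u v)"

definition closed_nbhd :: "('a \<Rightarrow> 'a \<Rightarrow> bool) \<Rightarrow> 'a set \<Rightarrow> 'a \<Rightarrow> 'a set" where
  "closed_nbhd E S v = {u \<in> S. u = v \<or> E v u}"

definition max_neighbour :: "('a \<Rightarrow> 'a \<Rightarrow> bool) \<Rightarrow> 'a set \<Rightarrow> 'a \<Rightarrow> 'a \<Rightarrow> bool" where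
  "max_neighbour E S v u \<longleftrightarrow> u \<in> closed_nbhd E S v \<and>
     (\<forall>w \<in> closed_nbhd E S v. closed_nbhd E S w \<subseteq> closed_nbhd E S u)"

definition max_nbhd_ordering :: "'a set \<Rightarrow> ('a \<Rightarrow> 'a \<Rightarrow> bool) \<Rightarrow> 'a list \<Rightarrow> bool" where
  "max_nbhd_ordering V E vs \<longleftrightarrow> distinct vs \<and> set vs = V \<and>
     (\<forall>i < length vs. \<exists>u. max_neighbour E (set (drop i vs)) (vs ! i) u)"

definition dually_chordal :: "'a set \<Rightarrow> ('a \<Rightarrow> 'a \<Rightarrow> bool) \<Rightarrow> bool" where
  "dually_chordal V E \<longleftrightarrow> (\<exists>vs. max_nbhd_ordering V E vs)"

definition colourable :: "('a \<Rightarrow> 'a \<Rightarrow> bool) \<Rightarrow> 'a set \<Rightarrow> nat \<Rightarrow> bool" where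
  "colourable E S k \<longleftrightarrow> (\<exists>c :: 'a \<Rightarrow> nat. (\<forall>v\<in>S. c v < k) \<and>
     (\<forall>u\<in>S. \<forall>v\<in>S. E u v \<longrightarrow> c u \<noteq> c v))"

definition chromatic_number :: "('a \<Rightarrow> 'a \<Rightarrow> bool) \<Rightarrow> 'a set \<Rightarrow> nat" where
  "chromatic_number E S = (LEAST k. colourable E S k)"

definition is_clique :: "('a \<Rightarrow> 'a \<Rightarrow> bool) \<Rightarrow> 'a set \<Rightarrow> bool" where
  "is_clique E C \<longleftrightarrow> (\<forall>u\<in>C. \<forall>v\<in>C. u \<noteq> v \<longrightarrow> E u v)"

definition clique_number :: "('a \<Rightarrow> 'a \<Rightarrow> bool) \<Rightarrow> 'a set \<Rightarrow> nat" where
  "clique_number E S = Max {card C | C. C \<subseteq> S \<and> is_clique E C}"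

definition perfect :: "'a set \<Rightarrow> ('a \<Rightarrow> 'a \<Rightarrow> bool) \<Rightarrow> bool" where
  "perfect V E \<longleftrightarrow> (\<forall>S \<subseteq> V. chromatic_number E S = clique_number E S)"

definition K4_free :: "'a set \<Rightarrow> ('a \<Rightarrow> 'a \<Rightarrow> bool) \<Rightarrow> bool" where
  "K4_free V E \<longleftrightarrow> \<not> (\<exists>C \<subseteq> V. card C = 4 \<and> is_clique E C)"

end

theory Submission
  imports Defs
begin



lemma sg_sym: "simple_graph V E \<Longrightarrow> E u v \<Longrightarrow> E v u"
  unfolding simple_graph_def by blast
lemma sg_irr: "simple_graph V E \<Longrightarrow> \<not> E v v"
  unfolding simple_graph_def by blast
lemma sg_V1: "simple_graph V E \<Longrightarrow> E u v \<Longrightarrow> u \<in> V"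
  unfolding simple_graph_def by blast
lemma sg_V2: "simple_graph V E \<Longrightarrow> E u v \<Longrightarrow> v \<in> V"
  unfolding simple_graph_def by blast
lemma sg_fin: "simple_graph V E \<Longrightarrow> finite V"
  unfolding simple_graph_def by blast

lemma K4_contra:
  assumes sg: "simple_graph V E" and k4: "K4_free V E"
    and V: "a \<in> V" "b \<in> V" "c \<in> V" "e \<in> V"
    and E: "E a b" "E a c" "E a e" "E b c" "E b e" "E c e"
  shows False
proof -
  have d: "a \<noteq> b" "a \<noteq> c" "a \<noteq> e" "b \<noteq> c" "b \<noteq> e" "c \<noteq> e"
    using E sg_irr[OF sg] by metis+
  have "card {a,b,c,e} = 4" using d by auto
  moreover have "is_clique E {a,b,c,e}" unfolding is_clique_def
    using E sg_sym[OF sg] by blast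
  moreover have "{a,b,c,e} \<subseteq> V" using V by auto
  ultimately show False using k4 unfolding K4_free_def by blast
qed

lemma earliest:
  assumes "finite A" "A \<noteq> {}" "A \<subseteq> set vs"
  shows "\<exists>p < length vs. vs ! p \<in> A \<and> A \<subseteq> set (drop p vs)"
proof -
  let ?P = "{i. i < length vs \<and> vs ! i \<in> A}"
  obtain a where a: "a \<in> A" using assms by auto
  then obtain i where i: "i < length vs" "vs ! i = a" using assms(3) by (meson in_set_conv_nth subsetD)
  have fin: "finite ?P" by simp
  have ne: "?P \<noteq> {}" using i a by auto
  let ?p = "Min ?P"
  have pP: "?p \<in> ?P" using Min_in[OF fin ne] .
  have "A \<subseteq> set (drop ?p vs)"
  proof
    fix w assume w: "w \<in> A"
    then obtain i where i: "i < length vs" "vs ! i = w" using assms(3) by (meson in_set_conv_nth subsetD)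
    then have "i \<in> ?P" using w by auto
    then have "?p \<le> i" using Min_le[OF fin] by blast
    then have "drop ?p vs ! (i - ?p) = w" using i by simp
    moreover have "i - ?p < length (drop ?p vs)" using i \<open>?p \<le> i\<close> by simp
    ultimately show "w \<in> set (drop ?p vs)" by (metis nth_mem)
  qed
  then show ?thesis using pP by blast
qed

lemma maxnb_key:
  assumes "max_neighbour E S z m" "w \<in> S" "w = z \<or> E z w" "y \<in> S" "y = w \<or> E w y"
  shows "y = m \<or> E m y"
  using assms unfolding max_neighbour_def closed_nbhd_def by blast

lemma maxnb_in:
  assumes "max_neighbour E S z m" shows "m \<in> S" "m = z \<or> E z m"
  using assms unfolding max_neighbour_def closed_nbhd_def by blast+

lemma config:
  assumes sg: "simple_graph V E" and k4: "K4_free V E" and mno: "max_nbhd_ordering V E vs"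
    and V: "r \<in> V" "u \<in> V" "q \<in> V" "d \<in> V" "x \<in> V" "y \<in> V"
    and E: "E r u" "E r q" "E u q" "E d u" "E d q" "\<not> E d r"
           "E x q" "E x d" "\<not> E x u" "E y u" "E y d" "\<not> E y q"
    and ne: "x \<noteq> u" "y \<noteq> q" "d \<noteq> r"
  shows False
proof -
  have sym: "\<And>a b. E a b \<Longrightarrow> E b a" using sg_sym[OF sg] .
  have vs: "distinct vs" "set vs = V"
    "\<And>i. i < length vs \<Longrightarrow> \<exists>u. max_neighbour E (set (drop i vs)) (vs ! i) u"
    using mno unfolding max_nbhd_ordering_def by auto
  let ?A = "{r,u,q,d,x,y}"
  obtain p where p: "p < length vs" "vs ! p \<in> ?A" "?A \<subseteq> set (drop p vs)"
    using earliest[of ?A vs] V vs(2) by auto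
  define S where "S = set (drop p vs)"
  define z where "z = vs ! p"
  obtain m where m: "max_neighbour E S z m" using vs(3)[OF p(1)] unfolding S_def z_def by blast
  have inS: "r \<in> S" "u \<in> S" "q \<in> S" "d \<in> S" "x \<in> S" "y \<in> S" using p(3) S_def by auto
  have mS: "m \<in> S" "m = z \<or> E z m" using maxnb_in[OF m] by auto
  have mV: "m \<in> V" using mS(1) S_def vs(2) by (metis in_set_dropD)
  have key: "\<And>w y. w \<in> S \<Longrightarrow> w = z \<or> E z w \<Longrightarrow> y \<in> S \<Longrightarrow> y = w \<or> E w y \<Longrightarrow> y = m \<or> E m y"
    using maxnb_key[OF m] by blast
  have tri: "\<not> (E m u \<and> E m q \<and> E m d)"
    using K4_contra[OF sg k4 mV V(2) V(3) V(4)] E sym by blast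
  have zc: "z = r \<or> z = u \<or> z = q \<or> z = d \<or> z = x \<or> z = y" using p(2) z_def by auto
  show False
  proof -
    { assume z: "z = r"
      have "u = m \<or> E m u" using key[OF inS(2) _ inS(2)] z E by blast
      moreover have "q = m \<or> E m q" using key[OF inS(3) _ inS(3)] z E by blast
      moreover have "d = m \<or> E m d" using key[OF inS(2) _ inS(4)] z E sym by blast
      moreover have "x = m \<or> E m x" using key[OF inS(3) _ inS(5)] z E sym by blast
      moreover have "y = m \<or> E m y" using key[OF inS(2) _ inS(6)] z E sym by blast
      ultimately have False using tri mS(2) z E ne sym by metis }
    moreover
    { assume z: "z = u"
      have "u = m \<or> E m u" using key[OF inS(2) _ inS(2)] z E by blast
      moreover have "q = m \<or> E m q" using key[OF inS(2) _ inS(3)] z E by blast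
      moreover have "d = m \<or> E m d" using key[OF inS(2) _ inS(4)] z E sym by blast
      moreover have "x = m \<or> E m x" using key[OF inS(3) _ inS(5)] z E sym by blast
      moreover have "y = m \<or> E m y" using key[OF inS(6) _ inS(6)] z E sym by blast
      moreover have "r = m \<or> E m r" using key[OF inS(1) _ inS(1)] z E sym by blast
      ultimately have False using tri z E ne sym by metis }
    moreover
    { assume z: "z = q"
      have "u = m \<or> E m u" using key[OF inS(3) _ inS(2)] z E sym by blast
      moreover have "q = m \<or> E m q" using key[OF inS(3) _ inS(3)] z E by blast
      moreover have "d = m \<or> E m d" using key[OF inS(3) _ inS(4)] z E sym by blast
      moreover have "x = m \<or> E m x" using key[OF inS(5) _ inS(5)] z E sym by blast
      moreover have "y = m \<or> E m y" using key[OF inS(2) _ inS(6)] z E sym by blast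
      moreover have "r = m \<or> E m r" using key[OF inS(1) _ inS(1)] z E sym by blast
      ultimately have False using tri z E ne sym by metis }
    moreover
    { assume z: "z = d"
      have "u = m \<or> E m u" using key[OF inS(4) _ inS(2)] z E sym by blast
      moreover have "q = m \<or> E m q" using key[OF inS(4) _ inS(3)] z E sym by blast
      moreover have "d = m \<or> E m d" using key[OF inS(4) _ inS(4)] z E by blast
      moreover have "x = m \<or> E m x" using key[OF inS(5) _ inS(5)] z E sym by blast
      moreover have "y = m \<or> E m y" using key[OF inS(6) _ inS(6)] z E sym by blast
      moreover have "r = m \<or> E m r" using key[OF inS(2) _ inS(1)] z E sym by blast
      ultimately have False using tri z E ne sym by metis }
    moreover
    { assume z: "z = x"
      have "u = m \<or> E m u" using key[OF inS(3) _ inS(2)] z E sym by blast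
      moreover have "q = m \<or> E m q" using key[OF inS(3) _ inS(3)] z E sym by blast
      moreover have "d = m \<or> E m d" using key[OF inS(4) _ inS(4)] z E sym by blast
      moreover have "y = m \<or> E m y" using key[OF inS(4) _ inS(6)] z E sym by blast
      moreover have "r = m \<or> E m r" using key[OF inS(3) _ inS(1)] z E sym by blast
      ultimately have False using tri mS(2) z E ne sym by metis }
    moreover
    { assume z: "z = y"
      have "u = m \<or> E m u" using key[OF inS(2) _ inS(2)] z E sym by blast
      moreover have "q = m \<or> E m q" using key[OF inS(2) _ inS(3)] z E sym by blast
      moreover have "d = m \<or> E m d" using key[OF inS(4) _ inS(4)] z E sym by blast
      moreover have "x = m \<or> E m x" using key[OF inS(4) _ inS(5)] z E sym by blast
      moreover have "r = m \<or> E m r" using key[OF inS(2) _ inS(1)] z E sym by blast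
      ultimately have False using tri mS(2) z E ne sym by metis }
    ultimately show False using zc by blast
  qed
qed




definition hole :: "'a set \<Rightarrow> ('a \<Rightarrow> 'a \<Rightarrow> bool) \<Rightarrow> (nat \<Rightarrow> 'a) \<Rightarrow> nat \<Rightarrow> bool" where
  "hole V E f k \<longleftrightarrow> 4 \<le> k \<and> (\<forall>i<k. f i \<in> V) \<and> inj_on f {..<k} \<and>
     (\<forall>a<k. \<forall>b<k. E (f a) (f b) \<longleftrightarrow> (b = Suc a mod k \<or> a = Suc b mod k))"

lemma suc_mod: "(a::nat) < k \<Longrightarrow> Suc a mod k = (if Suc a = k then 0 else Suc a)"
  by auto

lemma add_mod_small: "(a::nat) < k \<Longrightarrow> p < k \<Longrightarrow> (a+p) mod k = (if a + p < k then a+p else a+p-k)"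
  by (simp add: mod_if)

lemma rot_arith:
  assumes "(a::nat) < k" "b < k" "p < k"
  shows "((b+p) mod k = Suc ((a+p) mod k) mod k) = (b = Suc a mod k)"
proof -
  have 1: "Suc ((a+p) mod k) mod k = Suc (a+p) mod k" by (simp add: mod_Suc_eq)
  have 2: "Suc a mod k = (if Suc a = k then 0 else Suc a)" using assms by auto
  have 3: "Suc (a+p) mod k = (if Suc (a+p) < k then Suc (a+p) else Suc (a+p) - k)"
    using assms by (simp add: mod_if)
  have 4: "(b+p) mod k = (if b + p < k then b+p else b+p-k)" using assms by (simp add: mod_if)
  show ?thesis unfolding 1 2 3 4 using assms by auto
qed

lemma hole_adj:
  "hole V E f k \<Longrightarrow> a < k \<Longrightarrow> b < k \<Longrightarrow>
    E (f a) (f b) \<longleftrightarrow> (b = (if Suc a = k then 0 else Suc a) \<or> a = (if Suc b = k then 0 else Suc b))"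
proof -
  assume h: "hole V E f k" and a: "a < k" and b: "b < k"
  have "Suc a mod k = (if Suc a = k then 0 else Suc a)" "Suc b mod k = (if Suc b = k then 0 else Suc b)"
    using a b by auto
  then show ?thesis using h a b unfolding hole_def by simp
qed

lemma hole_rot:
  assumes h: "hole V E f k" and p: "p < k"
  shows "hole V E (\<lambda>i. f ((i+p) mod k)) k"
proof -
  have k: "4 \<le> k" "\<forall>i<k. f i \<in> V" "inj_on f {..<k}"
    and ad: "\<forall>a<k. \<forall>b<k. E (f a) (f b) \<longleftrightarrow> (b = Suc a mod k \<or> a = Suc b mod k)"
    using h unfolding hole_def by auto
  have V: "\<forall>i<k. f ((i+p) mod k) \<in> V" using k(2) k(1) by auto
  have inj: "inj_on (\<lambda>i. f ((i+p) mod k)) {..<k}"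
  proof (rule inj_onI)
    fix a b assume a: "a \<in> {..<k}" and b: "b \<in> {..<k}" and e: "f ((a+p) mod k) = f ((b+p) mod k)"
    have "(a+p) mod k = (b+p) mod k" using inj_onD[OF k(3) e] k(1) by auto
    then show "a = b" using a b p add_mod_small[of a k p] add_mod_small[of b k p]
      by (auto split: if_splits)
  qed
  have "\<forall>a<k. \<forall>b<k. E (f ((a+p) mod k)) (f ((b+p) mod k)) \<longleftrightarrow> (b = Suc a mod k \<or> a = Suc b mod k)"
  proof (intro allI impI)
    fix a b assume a: "a < k" and b: "b < k"
    have ma: "(a+p) mod k < k" "(b+p) mod k < k" using k(1) by auto
    have "E (f ((a+p) mod k)) (f ((b+p) mod k)) \<longleftrightarrow>
       ((b+p) mod k = Suc ((a+p) mod k) mod k \<or> (a+p) mod k = Suc ((b+p) mod k) mod k)"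
      using ad ma by blast
    also have "\<dots> \<longleftrightarrow> (b = Suc a mod k \<or> a = Suc b mod k)"
      using rot_arith[OF a b p] rot_arith[OF b a p] by simp
    finally show "E (f ((a+p) mod k)) (f ((b+p) mod k)) \<longleftrightarrow> (b = Suc a mod k \<or> a = Suc b mod k)" .
  qed
  then show ?thesis unfolding hole_def using k(1) V inj by blast
qed




lemma hole_adj_lt:
  "hole V E f k \<Longrightarrow> Suc a < k \<Longrightarrow> Suc b < k \<Longrightarrow> E (f a) (f b) \<longleftrightarrow> (b = Suc a \<or> a = Suc b)"
  using hole_adj[of V E f k a b] by auto

lemma hole_props:
  assumes "hole V E f k"
  shows "4 \<le> k" "\<And>i. i<k \<Longrightarrow> f i \<in> V" "inj_on f {..<k}"
  using assms unfolding hole_def by auto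

lemma hole_inj: "hole V E f k \<Longrightarrow> a < k \<Longrightarrow> b < k \<Longrightarrow> f a = f b \<Longrightarrow> a = b"
  using hole_props(3) by (metis inj_onD lessThan_iff)

lemma hole_dom_step:
  assumes sg: "simple_graph V E" and k4: "K4_free V E" and mno: "max_nbhd_ordering V E vs"
    and h: "hole V E g k"
    and Sj: "\<And>i. i < k \<Longrightarrow> g i \<in> set (drop j vs)"
    and jl: "j < length vs" and g0: "g 0 = vs ! j"
    and IH: "\<And>h L. hole V E h L \<Longrightarrow> h ` {..<L} \<subseteq> set (drop (Suc j) vs) \<Longrightarrow> \<exists>d. \<forall>i<L. E d (h i)"
  shows "\<exists>d. \<forall>i<k. E d (g i)"
proof -
  have sym: "\<And>a b. E a b \<Longrightarrow> E b a" using sg_sym[OF sg] .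
  have irr: "\<And>a. \<not> E a a" using sg_irr[OF sg] .
  have vs: "distinct vs" "set vs = V"
    "\<And>i. i < length vs \<Longrightarrow> \<exists>u. max_neighbour E (set (drop i vs)) (vs ! i) u"
    using mno unfolding max_nbhd_ordering_def by auto
  define S where "S = set (drop j vs)"
  define v where "v = vs ! j"
  have k4le: "4 \<le> k" using hole_props(1)[OF h] .
  have gV: "\<And>i. i < k \<Longrightarrow> g i \<in> V" using hole_props(2)[OF h] .
  have gS: "\<And>i. i < k \<Longrightarrow> g i \<in> S" using Sj S_def by auto
  have Sdec: "S = insert v (set (drop (Suc j) vs))" unfolding S_def v_def
    using jl by (metis Cons_nth_drop_Suc list.simps(15))
  obtain u where u: "max_neighbour E S v u" using vs(3)[OF jl] unfolding S_def v_def by blast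
  have uS: "u \<in> S" "u = v \<or> E v u" using maxnb_in[OF u] by auto
  have uV: "u \<in> V" using uS(1) S_def vs(2) by (metis in_set_dropD)
  have key: "\<And>w y. w \<in> S \<Longrightarrow> w = v \<or> E v w \<Longrightarrow> y \<in> S \<Longrightarrow> y = w \<or> E w y \<Longrightarrow> y = u \<or> E u y"
    using maxnb_key[OF u] by blast
  have adj: "\<And>a b. a < k \<Longrightarrow> b < k \<Longrightarrow> E (g a) (g b) \<longleftrightarrow> (b = (if Suc a = k then 0 else Suc a) \<or> a = (if Suc b = k then 0 else Suc b))"
    using hole_adj[OF h] by blast
  have v0: "g 0 = v" using g0 v_def by simp
  have e01: "E (g 0) (g 1)" using adj[of 0 1] k4le by auto
  have e0k: "E (g 0) (g (k-1))" using adj[of 0 "k-1"] k4le by auto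
  have e12: "E (g 1) (g 2)" using adj[of 1 2] k4le by auto
  have ekk: "E (g (k-1)) (g (k-2))" using adj[of "k-1" "k-2"] k4le by auto
  have y0: "g 0 = u \<or> E u (g 0)" using key[OF gS[of 0] _ gS[of 0]] v0 k4le by auto
  have y1: "g 1 = u \<or> E u (g 1)" using key[OF gS[of 0] _ gS[of 1]] v0 e01 k4le by auto
  have yk: "g (k-1) = u \<or> E u (g (k-1))" using key[OF gS[of 0] _ gS[of "k-1"]] v0 e0k k4le by auto
  have y2: "g 2 = u \<or> E u (g 2)" using key[OF gS[of 1] _ gS[of 2]] v0 e01 e12 k4le by auto
  have yk2: "g (k-2) = u \<or> E u (g (k-2))" using key[OF gS[of "k-1"] _ gS[of "k-2"]] v0 e0k ekk k4le by auto
  have unot: "\<And>i. i < k \<Longrightarrow> u \<noteq> g i"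
  proof
    fix i assume i: "i < k" and ui: "u = g i"
    have "i = 0 \<or> i = 1 \<or> i = k - 1"
    proof (cases "u = v")
      case True then show ?thesis using hole_inj[OF h i, of 0] ui v0 k4le by auto
    next
      case False then have "E (g 0) (g i)" using uS(2) ui v0 by simp
      then show ?thesis using adj[of 0 i] i k4le by (auto split: if_splits)
    qed
    moreover
    { assume "i = 0"
      then have "g 2 = g 0 \<or> E (g 0) (g 2)" using y2 ui by auto
      then have False using hole_inj[OF h, of 2 0] adj[of 0 2] k4le by auto }
    moreover
    { assume "i = 1"
      then have "g (k-1) = g 1 \<or> E (g 1) (g (k-1))" using yk ui by auto
      then have False using hole_inj[OF h, of "k-1" 1] adj[of 1 "k-1"] k4le by auto }
    moreover
    { assume "i = k - 1"
      then have "g 1 = g (k-1) \<or> E (g (k-1)) (g 1)" using y1 ui by auto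
      then have False using hole_inj[OF h, of 1 "k-1"] adj[of "k-1" 1] k4le by auto }
    ultimately show False by blast
  qed
  have u0: "E u (g 0)" using y0 unot[of 0] k4le by auto
  have u1: "E u (g 1)" using y1 unot[of 1] k4le by auto
  have u2: "E u (g 2)" using y2 unot[of 2] k4le by auto
  have uk: "E u (g (k-1))" using yk unot[of "k-1"] k4le by auto
  have uk2: "E u (g (k-2))" using yk2 unot[of "k-2"] k4le by auto
  have "\<forall>i<k. E u (g i)"
  proof (rule ccontr)
    assume "\<not> (\<forall>i<k. E u (g i))"
    then have ex: "\<exists>i. i < k \<and> \<not> E u (g i)" by blast
    define j0 where "j0 = (LEAST i. i < k \<and> \<not> E u (g i))"
    have j0: "j0 < k" "\<not> E u (g j0)" using LeastI_ex[OF ex] j0_def by auto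
    have bel: "\<And>i. i < j0 \<Longrightarrow> E u (g i)" using not_less_Least j0_def j0(1)
      by (metis (mono_tags, lifting) order.strict_trans)
    have j0r: "3 \<le> j0" "j0 + 3 \<le> k"
    proof -
      have "j0 \<noteq> 0" using j0(2) u0 by metis
      moreover have "j0 \<noteq> 1" using j0(2) u1 by metis
      moreover have "j0 \<noteq> 2" using j0(2) u2 by metis
      moreover have "j0 \<noteq> k-1" using j0(2) uk by metis
      moreover have "j0 \<noteq> k-2" using j0(2) uk2 by metis
      ultimately
      show "3 \<le> j0" "j0 + 3 \<le> k" using j0(1) by auto
    qed
    have ex2: "\<exists>i. j0 < i \<and> i < k \<and> E u (g i)" using uk2 j0r by (intro exI[of _ "k-2"]) auto
    define t where "t = (LEAST i. j0 < i \<and> i < k \<and> E u (g i))"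
    have t: "j0 < t" "t < k" "E u (g t)" using LeastI_ex[OF ex2] t_def by auto
    have tle: "t \<le> k - 2" using Least_le[of "\<lambda>i. j0 < i \<and> i < k \<and> E u (g i)" "k-2"] t_def uk2 j0r by auto
    have mid: "\<And>i. j0 < i \<Longrightarrow> i < t \<Longrightarrow> \<not> E u (g i)"
      using not_less_Least t_def t(2) by (metis (mono_tags, lifting) order.strict_trans)
    define s where "s = j0 - 1"
    have s: "2 \<le> s" "Suc s = j0" using j0r s_def by auto
    define L where "L = t - s + 2"
    define hh where "hh = (\<lambda>i. if i = 0 then u else g (s + i - 1))"
    have L4: "4 \<le> L" using t s L_def by auto
    have uadj: "\<And>c. s \<le> c \<Longrightarrow> c \<le> t \<Longrightarrow> E u (g c) \<longleftrightarrow> (c = s \<or> c = t)"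
    proof -
      fix c assume c: "s \<le> c" "c \<le> t"
      show "E u (g c) \<longleftrightarrow> (c = s \<or> c = t)"
        using bel[of c] mid[of c] j0 t s c by (cases "c = s"; cases "c = t"; cases "c = j0") auto
    qed
    have hV: "\<forall>i<L. hh i \<in> V"
    proof (intro allI impI)
      fix i assume i: "i < L"
      show "hh i \<in> V"
      proof (cases "i = 0")
        case True then show ?thesis using uV hh_def by simp
      next
        case False
        have "s + i - 1 < k" using i L_def tle t s by auto
        then show ?thesis using gV False hh_def by simp
      qed
    qed
    have rng: "\<And>i. i < L \<Longrightarrow> i \<noteq> 0 \<Longrightarrow> s + i - 1 < k \<and> s \<le> s + i - 1 \<and> s + i - 1 \<le> t"
      using L_def tle t s by auto
    have hinj: "inj_on hh {..<L}"
    proof (rule inj_onI)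
      fix a b assume a: "a \<in> {..<L}" and b: "b \<in> {..<L}" and e: "hh a = hh b"
      show "a = b"
      proof (cases "a = 0"; cases "b = 0")
        assume "a = 0" "b = 0" then show ?thesis by simp
      next
        assume a0: "a = 0" "b \<noteq> 0"
        have "u = g (s + b - 1)" using e a0 hh_def by simp
        then show ?thesis using unot rng[of b] b a0 by auto
      next
        assume a0: "a \<noteq> 0" "b = 0"
        have "u = g (s + a - 1)" using e a0 hh_def by simp
        then show ?thesis using unot rng[of a] a a0 by auto
      next
        assume a0: "a \<noteq> 0" "b \<noteq> 0"
        have "g (s + a - 1) = g (s + b - 1)" using e a0 hh_def by simp
        then have "s + a - 1 = s + b - 1" using hole_inj[OF h] rng[of a] rng[of b] a b a0 by auto
        then show ?thesis using a0 by auto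
      qed
    qed
    have hadj: "\<forall>a<L. \<forall>b<L. E (hh a) (hh b) \<longleftrightarrow> (b = Suc a mod L \<or> a = Suc b mod L)"
    proof (intro allI impI)
      fix a b assume a: "a < L" and b: "b < L"
      have sa: "Suc a mod L = (if Suc a = L then 0 else Suc a)" "Suc b mod L = (if Suc b = L then 0 else Suc b)"
        using a b by auto
      show "E (hh a) (hh b) \<longleftrightarrow> (b = Suc a mod L \<or> a = Suc b mod L)"
      proof (cases "a = 0"; cases "b = 0")
        assume "a = 0" "b = 0" then show ?thesis using irr hh_def L4 sa by auto
      next
        assume a0: "a = 0" "b \<noteq> 0"
        have "E (hh a) (hh b) \<longleftrightarrow> E u (g (s + b - 1))" using a0 hh_def by simp
        also have "\<dots> \<longleftrightarrow> (s + b - 1 = s \<or> s + b - 1 = t)" using rng[of b] a0 b by (intro uadj) auto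
        also have "\<dots> \<longleftrightarrow> (b = Suc a mod L \<or> a = Suc b mod L)" using a0 b L_def sa s t by auto
        finally show ?thesis .
      next
        assume a0: "a \<noteq> 0" "b = 0"
        have "E (hh a) (hh b) \<longleftrightarrow> E u (g (s + a - 1))" using a0 hh_def sym by auto
        also have "\<dots> \<longleftrightarrow> (s + a - 1 = s \<or> s + a - 1 = t)" using rng[of a] a0 a by (intro uadj) auto
        also have "\<dots> \<longleftrightarrow> (b = Suc a mod L \<or> a = Suc b mod L)" using a0 a L_def sa s t by auto
        finally show ?thesis .
      next
        assume a0: "a \<noteq> 0" "b \<noteq> 0"
        have "E (hh a) (hh b) \<longleftrightarrow> E (g (s + a - 1)) (g (s + b - 1))" using a0 hh_def by simp
        also have "\<dots> \<longleftrightarrow> (s + b - 1 = Suc (s + a - 1) \<or> s + a - 1 = Suc (s + b - 1))"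
          proof -
          have x1: "Suc (s + a - 1) < k" using rng[OF a a0(1)] tle t(2) k4le by auto
          have x2: "Suc (s + b - 1) < k" using rng[OF b a0(2)] tle t(2) k4le by auto
          show ?thesis using hole_adj_lt[OF h x1 x2] .
        qed
        also have "\<dots> \<longleftrightarrow> (b = Suc a mod L \<or> a = Suc b mod L)" using a0 a b L_def sa s by auto
        finally show ?thesis .
      qed
    qed
    have hhole: "hole V E hh L" unfolding hole_def using L4 hV hinj hadj by blast
    have hsub: "hh ` {..<L} \<subseteq> set (drop (Suc j) vs)"
    proof
      fix w assume "w \<in> hh ` {..<L}"
      then obtain i where i: "i < L" "w = hh i" by auto
      show "w \<in> set (drop (Suc j) vs)"
      proof (cases "i = 0")
        case True
        then have "w = u" using i hh_def by simp
        moreover have "u \<noteq> v" using unot[of 0] v0 k4le by auto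
        ultimately show ?thesis using uS(1) Sdec by auto
      next
        case False
        then have w: "w = g (s + i - 1)" "s + i - 1 < k" using i hh_def L_def tle t s by auto
        moreover have "g (s + i - 1) \<noteq> v" using hole_inj[OF h w(2), of 0] v0 s False k4le by auto
        ultimately show ?thesis using gS[OF w(2)] Sdec by auto
      qed
    qed
    obtain d where d: "\<forall>i<L. E d (hh i)" using IH[OF hhole hsub] by blast
    have du: "E d u" using d[rule_format, of 0] L4 hh_def by auto
    have dq: "E d (g s)" using d[rule_format, of 1] L4 hh_def by auto
    have dx: "E d (g (Suc s))" using d[rule_format, of 2] L4 hh_def by (auto simp: numeral_2_eq_2)
    have dy: "E d (g t)" using d[rule_format, of "L - 1"] L4 hh_def L_def t s by auto
    have dV: "d \<in> V" using sg_V1[OF sg du] .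
    have kS: "Suc (Suc s) < k" "Suc t < k" using tle s t by auto
    have sk: "s - 1 < k" "s < k" "Suc s < k" using kS by auto
    have gv: "g (s-1) \<in> V" "g s \<in> V" "g (Suc s) \<in> V" "g t \<in> V" using gV sk t(2) by auto
    have rq: "E (g (s - 1)) (g s)" using hole_adj_lt[OF h, of "s-1" s] s kS by auto
    have ru: "E (g (s - 1)) u" using bel[of "s-1"] s sym by auto
    have uq: "E u (g s)" using bel[of s] s by auto
    have xq: "E (g (Suc s)) (g s)" using hole_adj_lt[OF h, of "Suc s" s] kS by auto
    have xu: "\<not> E (g (Suc s)) u" using j0 s sym by auto
    have yq: "\<not> E (g t) (g s)" using hole_adj_lt[OF h, of t s] kS t s by auto
    have rx: "\<not> E (g (s - 1)) (g (Suc s))" using hole_adj_lt[OF h, of "s-1" "Suc s"] kS s by auto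
    have dr: "\<not> E d (g (s - 1))"
    proof
      assume "E d (g (s - 1))"
      then show False using K4_contra[OF sg k4 dV uV gv(1) gv(2)] du dq ru rq uq sym by blast
    qed
    have dnr: "d \<noteq> g (s - 1)" using dx rx by auto
    show False
      using config[OF sg k4 mno gv(1) uV gv(2) dV gv(3) gv(4)]
        ru rq uq du dq dr xq dx xu t(3) dy yq unot[of "Suc s"] hole_inj[OF h, of t s] kS t s dnr sym
      by auto
  qed
  then show ?thesis by blast
qed




lemma hole_dom:
  assumes sg: "simple_graph V E" and k4: "K4_free V E" and mno: "max_nbhd_ordering V E vs"
    and h: "hole V E f k"
  shows "\<exists>d. \<forall>i<k. E d (f i)"
proof -
  have vs: "set vs = V" using mno unfolding max_nbhd_ordering_def by auto
  have gen: "\<forall>j f k. length vs - j = n \<longrightarrow> hole V E f k \<longrightarrow> f ` {..<k} \<subseteq> set (drop j vs) \<longrightarrow> (\<exists>d. \<forall>i<k. E d (f i))" for n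
  proof (induction n)
    case 0
    show ?case
    proof (intro allI impI)
      fix j f k assume a: "length vs - j = 0" "hole V E f k" "f ` {..<k} \<subseteq> set (drop j vs)"
      have "drop j vs = []" using a(1) by simp
      moreover have "0 < k" using hole_props(1)[OF a(2)] by simp
      ultimately show "\<exists>d. \<forall>i<k. E d (f i)" using a(3) by auto
    qed
  next
    case (Suc n)
    show ?case
    proof (intro allI impI)
      fix j f k assume a: "length vs - j = Suc n" "hole V E f k" "f ` {..<k} \<subseteq> set (drop j vs)"
      have jl: "j < length vs" using a(1) by simp
      have IH: "\<And>h L. hole V E h L \<Longrightarrow> h ` {..<L} \<subseteq> set (drop (Suc j) vs) \<Longrightarrow> \<exists>d. \<forall>i<L. E d (h i)"
        using Suc.IH a(1) by (metis Suc_diff_Suc diff_Suc_1 jl)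
      have Sdec: "set (drop j vs) = insert (vs ! j) (set (drop (Suc j) vs))"
        using jl by (metis Cons_nth_drop_Suc list.simps(15))
      show "\<exists>d. \<forall>i<k. E d (f i)"
      proof (cases "\<exists>p<k. f p = vs ! j")
        case False
        then have "f ` {..<k} \<subseteq> set (drop (Suc j) vs)" using a(3) Sdec by auto
        then show ?thesis using IH[OF a(2)] by blast
      next
        case True
        then obtain p where p: "p < k" "f p = vs ! j" by blast
        define g where "g = (\<lambda>i. f ((i+p) mod k))"
        have hg: "hole V E g k" unfolding g_def using hole_rot[OF a(2) p(1)] .
        have k0: "0 < k" using p by simp
        have gS: "\<And>i. i < k \<Longrightarrow> g i \<in> set (drop j vs)" using a(3) k0 unfolding g_def by auto
        have g0: "g 0 = vs ! j" using p unfolding g_def by simp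
        obtain d where d: "\<forall>i<k. E d (g i)"
          using hole_dom_step[OF sg k4 mno hg gS jl g0 IH] by blast
        have "\<forall>i<k. E d (f i)"
        proof (intro allI impI)
          fix i assume i: "i < k"
          define i' where "i' = (if p \<le> i then i - p else i + k - p)"
          have i': "i' < k" "(i' + p) mod k = i" using i p unfolding i'_def by (auto simp: mod_if)
          then show "E d (f i)" using d unfolding g_def by metis
        qed
        then show ?thesis by blast
      qed
    qed
  qed
  have "f ` {..<k} \<subseteq> set (drop 0 vs)" using hole_props(2)[OF h] vs by auto
  then show ?thesis using gen[of "length vs", rule_format, of 0 f k] h by simp
qed

lemma three_vals: "(x::nat) < 3 \<Longrightarrow> y < 3 \<Longrightarrow> z < 3 \<Longrightarrow> w < 3 \<Longrightarrow> x \<noteq> z \<Longrightarrow> x \<noteq> w \<Longrightarrow>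
   y \<noteq> z \<Longrightarrow> y \<noteq> w \<Longrightarrow> z \<noteq> w \<Longrightarrow> x = y"
  by (auto simp: less_Suc_eq numeral_3_eq_3)

lemma odd_hole_false:
  assumes sg: "simple_graph V E" and col: "colourable E V 3"
    and h: "hole V E f k" and od: "odd k" and d: "\<forall>i<k. E d (f i)"
  shows False
proof -
  obtain c :: "'a \<Rightarrow> nat" where c: "\<forall>v\<in>V. c v < 3" "\<forall>u\<in>V. \<forall>v\<in>V. E u v \<longrightarrow> c u \<noteq> c v"
    using col unfolding colourable_def by blast
  have k4: "4 \<le> k" using hole_props(1)[OF h] .
  have fV: "\<And>i. i < k \<Longrightarrow> f i \<in> V" using hole_props(2)[OF h] .
  have dV: "d \<in> V" using sg_V1[OF sg, of d "f 0"] d k4 by auto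
  have ed: "\<And>i. i < k \<Longrightarrow> c d \<noteq> c (f i)" using c d dV fV by blast
  have cons: "\<And>i. Suc i < k \<Longrightarrow> c (f i) \<noteq> c (f (Suc i))"
  proof -
    fix i assume i: "Suc i < k"
    have "E (f i) (f (Suc i))" using hole_adj[OF h, of i "Suc i"] i by simp
    then show "c (f i) \<noteq> c (f (Suc i))" using c fV i by simp
  qed
  have lt: "\<And>i. i < k \<Longrightarrow> c (f i) < 3" using c fV by blast
  have cd: "c d < 3" using c dV by blast
  have alt: "\<forall>i<k. c (f i) = (if even i then c (f 0) else c (f 1))"
  proof (intro allI impI)
    fix i assume "i < k"
    then show "c (f i) = (if even i then c (f 0) else c (f 1))"
    proof (induction i)
      case 0 then show ?case by simp
    next
      case (Suc i)
      have IH: "c (f i) = (if even i then c (f 0) else c (f 1))" using Suc by simp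
      have a1: "c (f i) \<noteq> c (f (Suc i))" using cons Suc.prems .
      have a2: "c (f 0) \<noteq> c (f 1)" using cons[of 0] k4 by simp
      have a3: "c d \<noteq> c (f (Suc i))" "c d \<noteq> c (f 0)" "c d \<noteq> c (f 1)" "c d \<noteq> c (f i)"
        using ed Suc.prems k4 by auto
      have a4: "c (f (Suc i)) < 3" "c (f 0) < 3" "c (f 1) < 3" using lt Suc.prems k4 by auto
      show ?case
      proof (cases "even i")
        case True
        then have "c (f i) = c (f 0)" using IH by simp
        then have "c (f (Suc i)) = c (f 1)"
          using three_vals[of "c (f (Suc i))" "c (f 1)" "c d" "c (f 0)"] a1 a2 a3 a4 cd by metis
        then show ?thesis using True by simp
      next
        case False
        then have "c (f i) = c (f 1)" using IH by simp
        then have "c (f (Suc i)) = c (f 0)"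
          using three_vals[of "c (f (Suc i))" "c (f 0)" "c d" "c (f 1)"] a1 a2 a3 a4 cd by metis
        then show ?thesis using False by simp
      qed
    qed
  qed
  have "even (k - 1)" using od k4 by simp
  moreover have "k - 1 < k" using k4 by simp
  ultimately have "c (f (k-1)) = c (f 0)" using alt by presburger
  moreover have "E (f (k-1)) (f 0)" using hole_adj[OF h, of "k-1" 0] k4 by auto
  moreover have "f (k-1) \<in> V" "f 0 \<in> V" using fV k4 by auto
  ultimately show False using c by metis
qed




definition pw :: "'a set \<Rightarrow> ('a \<Rightarrow> 'a \<Rightarrow> bool) \<Rightarrow> (nat \<Rightarrow> 'a) \<Rightarrow> nat \<Rightarrow> bool" where
  "pw S E f n \<longleftrightarrow> f n \<in> S \<and> (\<forall>i<n. f i \<in> S \<and> E (f i) (f (Suc i)))"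

definition reach :: "'a set \<Rightarrow> ('a \<Rightarrow> 'a \<Rightarrow> bool) \<Rightarrow> 'a \<Rightarrow> 'a \<Rightarrow> bool" where
  "reach S E x y \<longleftrightarrow> (\<exists>f n. pw S E f n \<and> f 0 = x \<and> f n = y)"

lemma pw_in: "pw S E f n \<Longrightarrow> i \<le> n \<Longrightarrow> f i \<in> S"
  unfolding pw_def by (cases "i = n") auto

lemma pw_ext:
  assumes "pw S E f n" "E (f n) y" "y \<in> S"
  shows "pw S E (f(Suc n := y)) (Suc n)"
  using assms unfolding pw_def by (auto simp: less_Suc_eq)

lemma pw_join:
  assumes sym: "\<And>a b. E a b \<Longrightarrow> E b a"
    and f: "pw S E f n" and g: "pw S E g m" and e: "f n = g m"
  shows "pw S E (\<lambda>t. if t \<le> n then f t else g (n + m - t)) (n + m)"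
  unfolding pw_def
proof (intro conjI allI impI)
  show "(if n + m \<le> n then f (n + m) else g (n + m - (n + m))) \<in> S"
    using pw_in[OF f, of n] pw_in[OF g, of 0] e by auto
next
  fix i assume i: "i < n + m"
  show "(if i \<le> n then f i else g (n + m - i)) \<in> S"
    using pw_in[OF f, of i] pw_in[OF g, of "n + m - i"] i by auto
  show "E (if i \<le> n then f i else g (n + m - i)) (if Suc i \<le> n then f (Suc i) else g (n + m - Suc i))"
  proof (cases "Suc i \<le> n")
    case True then show ?thesis using f unfolding pw_def by auto
  next
    case False
    then have m1: "n + m - i - 1 < m" "Suc (n + m - i - 1) = n + m - i" using i by auto
    have "E (g (n + m - i - 1)) (g (n + m - i))" using g m1 unfolding pw_def by metis
    moreover have "i \<le> n \<Longrightarrow> g (n + m - i) = f i" using False e by (metis Suc_leI diff_add_inverse le_antisym not_less_eq_eq)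
    ultimately show ?thesis using False sym by (auto simp: diff_Suc)
  qed
qed

lemma reach_refl: "x \<in> S \<Longrightarrow> reach S E x x"
  unfolding reach_def pw_def by (rule exI[of _ "\<lambda>_. x"], rule exI[of _ 0]) auto

lemma reach_sym:
  assumes sym: "\<And>a b. E a b \<Longrightarrow> E b a" and r: "reach S E x y"
  shows "reach S E y x"
proof -
  obtain f n where f: "pw S E f n" "f 0 = x" "f n = y" using r unfolding reach_def by blast
  have "pw S E (\<lambda>t. f (n - t)) n" unfolding pw_def
  proof (intro conjI allI impI)
    show "f (n - n) \<in> S" using pw_in[OF f(1), of 0] by simp
    fix i assume i: "i < n"
    show "f (n - i) \<in> S" using pw_in[OF f(1), of "n-i"] by simp
    have "E (f (n - Suc i)) (f (Suc (n - Suc i)))" using f(1) i unfolding pw_def by auto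
    moreover have "Suc (n - Suc i) = n - i" using i by auto
    ultimately show "E (f (n - i)) (f (n - Suc i))" using sym by metis
  qed
  then show ?thesis unfolding reach_def using f by (intro exI[of _ "\<lambda>t. f (n - t)"] exI[of _ n]) auto
qed

lemma reach_trans:
  assumes r1: "reach S E x y" and r2: "reach S E y z"
  shows "reach S E x z"
proof -
  obtain f n where f: "pw S E f n" "f 0 = x" "f n = y" using r1 unfolding reach_def by blast
  obtain g m where g: "pw S E g m" "g 0 = y" "g m = z" using r2 unfolding reach_def by blast
  define h where "h = (\<lambda>t. if t \<le> n then f t else g (t - n))"
  have "pw S E h (n + m)" unfolding pw_def
  proof (intro conjI allI impI)
    show "h (n + m) \<in> S" using pw_in[OF f(1), of n] pw_in[OF g(1), of m] h_def f g by auto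
    fix i assume i: "i < n + m"
    show "h i \<in> S" using pw_in[OF f(1), of i] pw_in[OF g(1), of "i - n"] h_def i by auto
    show "E (h i) (h (Suc i))"
    proof (cases "Suc i \<le> n")
      case True then show ?thesis using f(1) unfolding pw_def h_def by auto
    next
      case False
      then have "i - n < m" "Suc (i - n) = Suc i - n" using i by auto
      then have "E (g (i - n)) (g (Suc i - n))" using g(1) unfolding pw_def by metis
      moreover have "i \<le> n \<Longrightarrow> i = n" using False by auto
      ultimately show ?thesis using False f(3) g(2) h_def by (cases "i = n") auto
    qed
  qed
  moreover have "h 0 = x" "h (n + m) = z" using h_def f g by auto
  ultimately show ?thesis unfolding reach_def by blast
qed

lemma reach_edge: "E x y \<Longrightarrow> x \<in> S \<Longrightarrow> y \<in> S \<Longrightarrow> reach S E x y"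
  unfolding reach_def pw_def
  by (rule exI[of _ "\<lambda>t. if t = 0 then x else y"], rule exI[of _ 1]) auto

lemma two_parity:
  assumes sym0: "\<forall>a b. E a b \<longrightarrow> E b a"
    and noodd0: "\<forall>h l. pw S E h l \<and> h l = h 0 \<longrightarrow> even l"
    and f: "pw S E f n" and g: "pw S E g m" and e0: "f 0 = g 0" and e: "f n = g m"
  shows "even n = even m"
proof (rule ccontr)
  assume "even n \<noteq> even m"
  have sym: "\<And>a b. E a b \<Longrightarrow> E b a" using sym0 by blast
  have noodd: "\<And>h l. pw S E h l \<Longrightarrow> h l = h 0 \<Longrightarrow> odd l \<Longrightarrow> False" using noodd0 by blast
  from \<open>even n \<noteq> even m\<close> have od: "odd (n + m)" by auto
  let ?h = "\<lambda>t. if t \<le> n then f t else g (n + m - t)"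
  have "pw S E ?h (n + m)" using pw_join[OF sym f g e] .
  moreover have "?h (n + m) = ?h 0" using e0 e by auto
  ultimately show False using noodd od by blast
qed

lemma bip:
  assumes sym: "\<And>a b. E a b \<Longrightarrow> E b a"
    and noodd: "\<And>h l. pw S E h l \<Longrightarrow> h l = h 0 \<Longrightarrow> odd l \<Longrightarrow> False"
  shows "colourable E S 2"
proof -
  have sym0: "\<forall>a b. E a b \<longrightarrow> E b a" using sym by blast
  have noodd0: "\<forall>h l. pw S E h l \<and> h l = h 0 \<longrightarrow> even l" using noodd by blast
  define root where "root = (\<lambda>x. SOME r. r \<in> {z. reach S E x z})"
  define col where "col = (\<lambda>x. if (\<exists>f n. pw S E f n \<and> f 0 = root x \<and> f n = x \<and> even n) then (0::nat) else 1)"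
  have rootr: "\<And>x. x \<in> S \<Longrightarrow> reach S E (root x) x"
  proof -
    fix x assume x: "x \<in> S"
    have "root x \<in> {z. reach S E x z}" unfolding root_def using reach_refl[OF x] by (metis someI mem_Collect_eq)
    then show "reach S E (root x) x" using reach_sym[where E=E and S=S, OF sym] by blast
  qed
  have rooteq: "\<And>x y. E x y \<Longrightarrow> x \<in> S \<Longrightarrow> y \<in> S \<Longrightarrow> root x = root y"
  proof -
    fix x y assume xy: "E x y" "x \<in> S" "y \<in> S"
    have "{z. reach S E x z} = {z. reach S E y z}"
      using reach_edge[of E x y S, OF xy] reach_edge[of E y x S, OF sym[OF xy(1)] xy(3) xy(2)] reach_trans[of S E] by blast
    then show "root x = root y" unfolding root_def by simp
  qed
  have "\<forall>u\<in>S. \<forall>v\<in>S. E u v \<longrightarrow> col u \<noteq> col v"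
  proof (intro ballI impI)
    fix x y assume x: "x \<in> S" and y: "y \<in> S" and xy: "E x y"
    define r where "r = root x"
    have ry: "root y = r" using rooteq[OF xy x y] r_def by simp
    obtain f n where f: "pw S E f n" "f 0 = r" "f n = x" using rootr[OF x] r_def unfolding reach_def by blast
    have f': "pw S E (f(Suc n := y)) (Suc n)" using pw_ext[OF f(1)] xy f(3) y by simp
    have f'e: "(f(Suc n := y)) 0 = r" "(f(Suc n := y)) (Suc n) = y" using f by auto
    have parx: "\<And>g m. pw S E g m \<Longrightarrow> g 0 = r \<Longrightarrow> g m = x \<Longrightarrow> even m = even n"
    proof -
      fix g m assume g: "pw S E g m" "g 0 = r" "g m = x"
      show "even m = even n" using two_parity[OF sym0 noodd0 g(1) f(1)] g f by simp
    qed
    have pary: "\<And>g m. pw S E g m \<Longrightarrow> g 0 = r \<Longrightarrow> g m = y \<Longrightarrow> even m = even (Suc n)"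
    proof -
      fix g m assume g: "pw S E g m" "g 0 = r" "g m = y"
      show "even m = even (Suc n)" using two_parity[OF sym0 noodd0 g(1) f'] g f'e by simp
    qed
    have ex1: "(\<exists>g m. pw S E g m \<and> g 0 = r \<and> g m = x \<and> even m) \<longleftrightarrow> even n"
      using parx f by blast
    have ex2: "(\<exists>g m. pw S E g m \<and> g 0 = r \<and> g m = y \<and> even m) \<longleftrightarrow> even (Suc n)"
    proof
      assume "\<exists>g m. pw S E g m \<and> g 0 = r \<and> g m = y \<and> even m"
      then show "even (Suc n)" using pary by blast
    next
      assume "even (Suc n)"
      then show "\<exists>g m. pw S E g m \<and> g 0 = r \<and> g m = y \<and> even m" using f' f'e by blast
    qed
    have cx: "col x = (if even n then 0 else 1)"
      unfolding col_def r_def[symmetric] using ex1 by simp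
    have cy: "col y = (if even (Suc n) then 0 else 1)"
      unfolding col_def ry using ex2 by simp
    show "col x \<noteq> col y" using cx cy by auto
  qed
  moreover have "\<forall>v\<in>S. col v < 2" unfolding col_def by auto
  ultimately show ?thesis unfolding colourable_def by blast
qed




lemma oddwalk_hole:
  assumes sg: "simple_graph V E" and SV: "S \<subseteq> V"
    and tf: "\<forall>a\<in>S. \<forall>b\<in>S. \<forall>c\<in>S. E a b \<longrightarrow> E b c \<longrightarrow> E a c \<longrightarrow> False"
    and w: "pw S E f l" "f l = f 0" "odd l"
  shows "\<exists>g k. hole V E g k \<and> odd k"
proof -
  have sym: "\<And>a b. E a b \<Longrightarrow> E b a" using sg_sym[OF sg] .
  have irr: "\<And>a. \<not> E a a" using sg_irr[OF sg] .
  define P where "P = (\<lambda>l. odd l \<and> (\<exists>f. pw S E f l \<and> f l = f 0))"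
  have Pl: "P l" using w P_def by blast
  define l0 where "l0 = (LEAST l. P l)"
  have Pl0: "P l0" using LeastI[of P l, OF Pl] l0_def by simp
  obtain g where g: "pw S E g l0" "g l0 = g 0" and od: "odd l0" using Pl0 P_def by blast
  have mn: "\<And>h m. pw S E h m \<Longrightarrow> h m = h 0 \<Longrightarrow> odd m \<Longrightarrow> l0 \<le> m"
    using Least_le[of P] l0_def P_def by blast
  have gS: "\<And>i. i \<le> l0 \<Longrightarrow> g i \<in> S" using pw_in[OF g(1)] .
  have ge: "\<And>i. i < l0 \<Longrightarrow> E (g i) (g (Suc i))" using g(1) unfolding pw_def by blast
  have l0pos: "0 < l0" using od by (cases l0) auto
  have n1: "l0 \<noteq> 1" using ge[of 0] g(2) irr by (metis One_nat_def less_one)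
  have n3: "l0 \<noteq> 3"
  proof
    assume l3: "l0 = 3"
    have "E (g 0) (g 1)" "E (g 1) (g 2)" "E (g 2) (g 0)" using ge[of 0] ge[of 1] ge[of 2] g(2) l3
      by (auto simp: numeral_2_eq_2 numeral_3_eq_3)
    moreover have "g 0 \<in> S" "g 1 \<in> S" "g 2 \<in> S" using gS l3 by auto
    ultimately show False using tf sym by blast
  qed
  have l5: "5 \<le> l0" using od n1 n3 l0pos by presburger
  have inj: "\<And>a b. a < b \<Longrightarrow> b < l0 \<Longrightarrow> g a \<noteq> g b"
  proof
    fix a b assume ab: "a < b" "b < l0" and e: "g a = g b"
    define h1 where "h1 = (\<lambda>t. g (a + t))"
    define h2 where "h2 = (\<lambda>t. if t \<le> a then g t else g (t + (b - a)))"
    have w1: "pw S E h1 (b - a)" unfolding pw_def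
    proof (intro conjI allI impI)
      show "h1 (b - a) \<in> S" using gS[of b] ab h1_def by simp
      fix i assume i: "i < b - a"
      have "a + i < l0" using i ab by simp
      then show "h1 i \<in> S" "E (h1 i) (h1 (Suc i))" using gS[of "a+i"] ge[of "a+i"] h1_def by auto
    qed
    have c1: "h1 (b - a) = h1 0" using ab e h1_def by simp
    have w2: "pw S E h2 (l0 - (b - a))" unfolding pw_def
    proof (intro conjI allI impI)
      have "\<not> l0 - (b - a) \<le> a" "l0 - (b - a) + (b - a) = l0" using ab by auto
      then show "h2 (l0 - (b - a)) \<in> S" using gS[of l0] h2_def by simp
      fix i assume i: "i < l0 - (b - a)"
      have "i < l0" "i + (b - a) < l0" using i ab by auto
      then show "h2 i \<in> S" unfolding h2_def using gS[of i] gS[of "i + (b - a)"] by simp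
      show "E (h2 i) (h2 (Suc i))"
      proof (cases "i < a")
        case True then show ?thesis using ge[of i] ab h2_def by simp
      next
        case False
        have "i + (b - a) < l0" using i ab by auto
        then have "E (g (i + (b - a))) (g (Suc (i + (b - a))))" using ge[of "i + (b-a)"] by simp
        moreover have "g (i + (b - a)) = (if i \<le> a then g i else g (i + (b - a)))"
          using e ab False by (cases "i = a") auto
        moreover have "\<not> Suc i \<le> a" using False by simp
        moreover have "Suc (i + (b - a)) = Suc i + (b - a)" by simp
        ultimately show ?thesis unfolding h2_def by metis
      qed
    qed
    have c2: "h2 (l0 - (b - a)) = h2 0"
    proof -
      have "\<not> l0 - (b - a) \<le> a" "l0 - (b - a) + (b - a) = l0" using ab by auto
      then show ?thesis using g(2) h2_def by simp
    qed
    have "odd (b - a) \<or> odd (l0 - (b - a))"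
    proof -
      have "(b - a) + (l0 - (b - a)) = l0" using ab by simp
      then show ?thesis using od by (metis odd_add)
    qed
    moreover have "b - a < l0" "l0 - (b - a) < l0" using ab by auto
    ultimately show False
      using mn[OF w1 c1] mn[OF w2 c2] by (meson not_le)
  qed
  have chord: "\<And>a b. a < b \<Longrightarrow> b < l0 \<Longrightarrow> E (g a) (g b) \<Longrightarrow> b = Suc a \<or> (a = 0 \<and> b = l0 - 1)"
  proof (rule ccontr)
    fix a b assume ab: "a < b" "b < l0" and e: "E (g a) (g b)" and nc: "\<not> (b = Suc a \<or> (a = 0 \<and> b = l0 - 1))"
    define h1 where "h1 = (\<lambda>t. if t \<le> b - a then g (a + t) else g a)"
    define h2 where "h2 = (\<lambda>t. if t \<le> a then g t else g (t + (b - a - 1)))"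
    have w1: "pw S E h1 (b - a + 1)" unfolding pw_def
    proof (intro conjI allI impI)
      show "h1 (b - a + 1) \<in> S" using gS ab h1_def by auto
      fix i assume i: "i < b - a + 1"
      show "h1 i \<in> S" using gS ab i h1_def by auto
      show "E (h1 i) (h1 (Suc i))"
      proof (cases "i < b - a")
        case True then show ?thesis using ge[of "a + i"] ab h1_def by auto
      next
        case False then have "i = b - a" using i by auto
        then show ?thesis using e sym ab h1_def by auto
      qed
    qed
    have c1: "h1 (b - a + 1) = h1 0" using h1_def by simp
    have w2: "pw S E h2 (l0 - (b - a) + 1)" unfolding pw_def
    proof (intro conjI allI impI)
      show "h2 (l0 - (b - a) + 1) \<in> S" using gS ab h2_def by auto
      fix i assume i: "i < l0 - (b - a) + 1"
      show "h2 i \<in> S" using gS ab i h2_def by auto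
      show "E (h2 i) (h2 (Suc i))"
      proof (cases "i < a")
        case True then show ?thesis using ge[of i] ab h2_def by auto
      next
        case False
        show ?thesis
        proof (cases "i = a")
          case True then show ?thesis using e ab h2_def by auto
        next
          case False2: False
          then have "E (g (i + (b - a - 1))) (g (Suc (i + (b - a - 1))))" using ge[of "i + (b - a - 1)"] i ab False by auto
          moreover have "Suc (i + (b - a - 1)) = Suc i + (b - a - 1)" by simp
          ultimately show ?thesis using False False2 h2_def by auto
        qed
      qed
    qed
    have c2: "h2 (l0 - (b - a) + 1) = h2 0" using ab g(2) h2_def by auto
    have "odd (b - a + 1) \<or> odd (l0 - (b - a) + 1)"
    proof -
      have "(b - a + 1) + (l0 - (b - a) + 1) = l0 + 2" using ab by simp
      moreover have "odd (l0 + 2)" using od by simp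
      ultimately show ?thesis by (metis odd_add)
    qed
    moreover have "b - a + 1 < l0" using nc ab by auto
    moreover have "l0 - (b - a) + 1 < l0" using nc ab by auto
    ultimately show False using mn[OF w1 c1] mn[OF w2 c2] by (meson not_le)
  qed
  have adj: "\<forall>a<l0. \<forall>b<l0. E (g a) (g b) \<longleftrightarrow> (b = Suc a mod l0 \<or> a = Suc b mod l0)"
  proof (intro allI impI)
    fix a b assume a: "a < l0" and b: "b < l0"
    have sa: "Suc a mod l0 = (if Suc a = l0 then 0 else Suc a)" "Suc b mod l0 = (if Suc b = l0 then 0 else Suc b)"
      using a b by auto
    show "E (g a) (g b) \<longleftrightarrow> (b = Suc a mod l0 \<or> a = Suc b mod l0)"
    proof
      assume e: "E (g a) (g b)"
      have "a \<noteq> b" using e irr by auto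
      then have "a < b \<or> b < a" by auto
      then show "b = Suc a mod l0 \<or> a = Suc b mod l0"
      proof
        assume "a < b" then show ?thesis using chord[OF _ b e] sa l5 a b by auto
      next
        assume "b < a" then show ?thesis using chord[OF _ a sym[OF e]] sa l5 a b by auto
      qed
    next
      assume "b = Suc a mod l0 \<or> a = Suc b mod l0"
      then show "E (g a) (g b)"
      proof
        assume "b = Suc a mod l0"
        then show ?thesis using ge[OF a] g(2) sa by (auto split: if_splits)
      next
        assume "a = Suc b mod l0"
        then show ?thesis using ge[OF b] g(2) sa sym by (auto split: if_splits)
      qed
    qed
  qed
  have "hole V E g l0" unfolding hole_def
  proof (intro conjI)
    show "4 \<le> l0" using l5 by simp
    show "\<forall>i<l0. g i \<in> V" using gS SV by auto
    show "inj_on g {..<l0}" using inj by (metis inj_onI lessThan_iff nat_neq_iff)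
    show "\<forall>a<l0. \<forall>b<l0. E (g a) (g b) = (b = Suc a mod l0 \<or> a = Suc b mod l0)" using adj .
  qed
  then show ?thesis using od by blast
qed




lemma clique_le_col:
  assumes col: "colourable E S k" and C: "C \<subseteq> S" "is_clique E C" "finite C"
  shows "card C \<le> k"
proof -
  obtain c :: "'a \<Rightarrow> nat" where c: "\<forall>v\<in>S. c v < k" "\<forall>u\<in>S. \<forall>v\<in>S. E u v \<longrightarrow> c u \<noteq> c v"
    using col unfolding colourable_def by blast
  have "inj_on c C"
  proof (rule inj_onI)
    fix x y assume "x \<in> C" "y \<in> C" "c x = c y"
    then show "x = y" using c C unfolding is_clique_def by blast
  qed
  moreover have "c ` C \<subseteq> {..<k}" using c C by auto
  ultimately have "card C \<le> card {..<k}" using card_inj_on_le by blast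
  then show ?thesis by simp
qed

lemma col_mono: "colourable E S k \<Longrightarrow> k \<le> k' \<Longrightarrow> T \<subseteq> S \<Longrightarrow> colourable E T k'"
  unfolding colourable_def by (meson less_le_trans subsetD)

lemma col_exists: "finite S \<Longrightarrow> (\<And>v. \<not> E v v) \<Longrightarrow> colourable E S (card S)"
proof -
  assume f: "finite S" and irr: "\<And>v. \<not> E v v"
  obtain h where h: "bij_betw h S {0..<card S}" using ex_bij_betw_finite_nat[OF f] by blast
  have "\<forall>v\<in>S. h v < card S" using h unfolding bij_betw_def by auto
  moreover have "\<forall>u\<in>S. \<forall>v\<in>S. E u v \<longrightarrow> h u \<noteq> h v"
    using h irr unfolding bij_betw_def inj_on_def by metis
  ultimately show ?thesis unfolding colourable_def by blast
qed

lemma clique_fin: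
  assumes "finite S"
  shows "finite {card C | C. C \<subseteq> S \<and> is_clique E C}" "(0::nat) \<in> {card C | C. C \<subseteq> S \<and> is_clique E C}"
proof -
  have "{card C | C. C \<subseteq> S \<and> is_clique E C} \<subseteq> card ` Pow S" by auto
  then show "finite {card C | C. C \<subseteq> S \<and> is_clique E C}" using assms finite_subset by blast
  have "{} \<subseteq> S \<and> is_clique E {}" unfolding is_clique_def by simp
  then show "(0::nat) \<in> {card C | C. C \<subseteq> S \<and> is_clique E C}" by (metis (mono_tags, lifting) card.empty mem_Collect_eq)
qed

lemma K4_clique_le3:
  assumes k4: "K4_free V E" and C: "C \<subseteq> V" "is_clique E C" "finite C"
  shows "card C \<le> 3"
proof (rule ccontr)
  assume "\<not> card C \<le> 3"
  then obtain T where T: "T \<subseteq> C" "card T = 4" "finite T" using obtain_subset_with_card_n[of 4 C] by auto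
  have "is_clique E T" using C(2) T(1) unfolding is_clique_def by blast
  then show False using k4 T C(1) unfolding K4_free_def by blast
qed

theorem theorem2:
  fixes V :: "'a set" and E :: "'a \<Rightarrow> 'a \<Rightarrow> bool"
  assumes "simple_graph V E" and "connected_graph V E" and "dually_chordal V E"
  shows "colourable E V 3 \<longleftrightarrow> perfect V E \<and> K4_free V E"
proof
  have sg: "simple_graph V E" using assms(1) .
  have fin: "finite V" using sg_fin[OF sg] .
  have irr: "\<And>v. \<not> E v v" using sg_irr[OF sg] .
  have sym: "\<And>a b. E a b \<Longrightarrow> E b a" using sg_sym[OF sg] .
  obtain vs where mno: "max_nbhd_ordering V E vs" using assms(3) unfolding dually_chordal_def by blast
  {
    assume col: "colourable E V 3"
    have k4: "K4_free V E" unfolding K4_free_def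
    proof
      assume "\<exists>C\<subseteq>V. card C = 4 \<and> is_clique E C"
      then obtain C where C: "C \<subseteq> V" "card C = 4" "is_clique E C" by blast
      have "finite C" using C(2) card.infinite by fastforce
      then have "card C \<le> 3" using clique_le_col[OF col C(1) C(3)] by blast
      then show False using C(2) by simp
    qed
    have "perfect V E" unfolding perfect_def
    proof (intro allI impI)
      fix S assume SV: "S \<subseteq> V"
      have finS: "finite S" using fin SV finite_subset by blast
      define \<chi> where "\<chi> = chromatic_number E S"
      define \<omega> where "\<omega> = clique_number E S"
      have colS3: "colourable E S 3" using col_mono[OF col _ SV] by simp
      have colchi: "colourable E S \<chi>" unfolding \<chi>_def chromatic_number_def using colS3 by (rule LeastI)
      have chi3: "\<chi> \<le> 3" unfolding \<chi>_def chromatic_number_def using colS3 by (rule Least_le)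
      have cf: "finite {card C | C. C \<subseteq> S \<and> is_clique E C}" "(0::nat) \<in> {card C | C. C \<subseteq> S \<and> is_clique E C}"
        using clique_fin[OF finS] by auto
      have omge: "\<And>C. C \<subseteq> S \<Longrightarrow> is_clique E C \<Longrightarrow> card C \<le> \<omega>"
        unfolding \<omega>_def clique_number_def using cf(1) by (intro Max_ge) auto
      have omin: "\<omega> \<in> {card C | C. C \<subseteq> S \<and> is_clique E C}"
        unfolding \<omega>_def clique_number_def using cf by (intro Max_in) auto
      have om_le: "\<omega> \<le> \<chi>" using omin clique_le_col[OF colchi] finS finite_subset by blast
      have "colourable E S \<omega> \<or> 3 \<le> \<omega>"
      proof (cases "3 \<le> \<omega>")
        case True then show ?thesis by simp
      next
        case False
        have tf: "\<forall>a\<in>S. \<forall>b\<in>S. \<forall>c\<in>S. E a b \<longrightarrow> E b c \<longrightarrow> E a c \<longrightarrow> False"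
        proof (intro ballI impI)
          fix a b c assume abc: "a \<in> S" "b \<in> S" "c \<in> S" "E a b" "E b c" "E a c"
          have "card {a,b,c} = 3" using abc irr by (metis card_3_iff)
          moreover have "is_clique E {a,b,c}" unfolding is_clique_def using abc sym by blast
          ultimately have "3 \<le> \<omega>" using omge[of "{a,b,c}"] abc by auto
          then show False using False by simp
        qed
        have noodd: "\<And>h l. pw S E h l \<Longrightarrow> h l = h 0 \<Longrightarrow> odd l \<Longrightarrow> False"
        proof -
          fix h l assume w: "pw S E h l" "h l = h 0" "odd l"
          obtain g k where gk: "hole V E g k" "odd k" using oddwalk_hole[OF sg SV tf w] by blast
          obtain d where "\<forall>i<k. E d (g i)" using hole_dom[OF sg k4 mno gk(1)] by blast
          then show False using odd_hole_false[OF sg col gk(1) gk(2)] by blast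
        qed
        have col2: "colourable E S 2" using bip[of E S] sym noodd by blast
        have "colourable E S \<omega>"
        proof -
          have "\<omega> = 2 \<or> \<omega> = 1 \<or> \<omega> = 0" using False by auto
          moreover
          { assume "\<omega> = 2" then have ?thesis using col2 by simp }
          moreover
          { assume o1: "\<omega> = 1"
            have "\<forall>u\<in>S. \<forall>v\<in>S. \<not> E u v"
            proof (intro ballI notI)
              fix u v assume uv: "u \<in> S" "v \<in> S" "E u v"
              have "card {u,v} = 2" using uv irr by (metis card_2_iff)
              moreover have "is_clique E {u,v}" unfolding is_clique_def using uv sym by blast
              ultimately show False using omge[of "{u,v}"] uv o1 by auto
            qed
            then have ?thesis unfolding colourable_def using o1 by (intro exI[of _ "\<lambda>_. 0"]) auto }
          moreover
          { assume o0: "\<omega> = 0"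
            have "S = {}"
            proof (rule ccontr)
              assume "S \<noteq> {}"
              then obtain v where "v \<in> S" by blast
              moreover have "is_clique E {v}" unfolding is_clique_def by blast
              ultimately show False using omge[of "{v}"] o0 by auto
            qed
            then have ?thesis unfolding colourable_def by blast }
          ultimately show ?thesis by blast
        qed
        then show ?thesis by simp
      qed
      then have "\<chi> \<le> \<omega>"
      proof
        assume "colourable E S \<omega>"
        then show ?thesis unfolding \<chi>_def chromatic_number_def by (rule Least_le)
      next
        assume "3 \<le> \<omega>" then show ?thesis using chi3 by simp
      qed
      then show "chromatic_number E S = clique_number E S" using om_le \<chi>_def \<omega>_def by simp
    qed
    then show "perfect V E \<and> K4_free V E" using k4 by simp
  }
  {
    assume pk: "perfect V E \<and> K4_free V E"
    have eq: "chromatic_number E V = clique_number E V" using pk unfolding perfect_def by blast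
    have cf: "finite {card C | C. C \<subseteq> V \<and> is_clique E C}" "(0::nat) \<in> {card C | C. C \<subseteq> V \<and> is_clique E C}"
      using clique_fin[OF fin] by auto
    have omin: "clique_number E V \<in> {card C | C. C \<subseteq> V \<and> is_clique E C}"
      unfolding clique_number_def using cf by (intro Max_in) auto
    then obtain C where C: "C \<subseteq> V" "is_clique E C" "clique_number E V = card C" by blast
    have "card C \<le> 3" using K4_clique_le3[of V E C] pk C fin finite_subset by blast
    moreover have "colourable E V (chromatic_number E V)"
      unfolding chromatic_number_def using col_exists[OF fin irr] by (rule LeastI)
    ultimately show "colourable E V 3" using eq C col_mono by (metis order_refl)
  }
qed


end
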